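(* For real parameters $p,r$, the Gini mean $G_{p,r}$ is stable if and only if $pr(p+r)=0$; i.e. the only stable Gini means are the power means $G_{0,r}=B_r$, $G_{p,0}=B_p$, $G_{p,-p}=B_0$.
   Context: For $s,t>0$: $G_{p,r}(s,t)=\big(\frac{s^p+t^p}{s^r+t^r}\big)^{1/(p-r)}$ if $p\ne r$; $\exp\big(\frac{s^p\log s+t^p\log t}{s^p+t^p}\big)$ if $p=r\ne0$; $\sqrt{st}$ if $p=r=0$. Power mean: $B_r(s,t)=\big(\frac{s^r+t^r}2\big)^{1/r}$ for $r\ne0$, $B_0(s,t)=\sqrt{st}$. A mean $M$ is stable if $M(s,t)=M\big(M(s,M(s,t)),M(M(s,t),t)\big)$ for all $s,t>0$. *)

theory Defs
  imports Complex_Main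
begin

text \<open>Gini mean G_{p,r}(s,t), intended for s, t > 0.\<close>
definition gini_mean :: "real \<Rightarrow> real \<Rightarrow> real \<Rightarrow> real \<Rightarrow> real" where
  "gini_mean p r s t =
     (if p \<noteq> r then ((s powr p + t powr p) / (s powr r + t powr r)) powr (1 / (p - r))
      else if p \<noteq> 0 then exp ((s powr p * ln s + t powr p * ln t) / (s powr p + t powr p))
      else sqrt (s * t))"

text \<open>Power mean B_r(s,t), intended for s, t > 0.\<close>
definition power_mean :: "real \<Rightarrow> real \<Rightarrow> real \<Rightarrow> real" where
  "power_mean r s t = (if r \<noteq> 0 then ((s powr r + t powr r) / 2) powr (1 / r) else sqrt (s * t))"

definition stable_mean :: "(real \<Rightarrow> real \<Rightarrow> real) \<Rightarrow> bool" where
  "stable_mean M \<longleftrightarrow> (\<forall>s t. s > 0 \<longrightarrow> t > 0 \<longrightarrow>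
      M s t = M (M s (M s t)) (M (M s t) t))"

end

theory Submission
  imports Defs "HOL-Real_Asymp.Real_Asymp"
begin


lemma stable_cong:
  assumes eq: "\<And>s t. s > 0 \<Longrightarrow> t > 0 \<Longrightarrow> M s t = N s t"
      and pos: "\<And>s t. s > 0 \<Longrightarrow> t > 0 \<Longrightarrow> N s t > 0"
  shows "stable_mean M \<longleftrightarrow> stable_mean N"
  unfolding stable_mean_def
proof (intro iffI allI impI)
  fix s t :: real assume A: "\<forall>s t. 0 < s \<longrightarrow> 0 < t \<longrightarrow> M s t = M (M s (M s t)) (M (M s t) t)"
    and s: "s > 0" and t: "t > 0"
  have "N s t = M s t" using eq s t by simp
  also have "\<dots> = M (M s (M s t)) (M (M s t) t)" using A s t by blast
  also have "\<dots> = N (N s (N s t)) (N (N s t) t)" using eq pos s t by simp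
  finally show "N s t = N (N s (N s t)) (N (N s t) t)" .
next
  fix s t :: real assume A: "\<forall>s t. 0 < s \<longrightarrow> 0 < t \<longrightarrow> N s t = N (N s (N s t)) (N (N s t) t)"
    and s: "s > 0" and t: "t > 0"
  have "M s t = N s t" using eq s t by simp
  also have "\<dots> = N (N s (N s t)) (N (N s t) t)" using A s t by blast
  also have "\<dots> = M (M s (M s t)) (M (M s t) t)" using eq pos s t by simp
  finally show "M s t = M (M s (M s t)) (M (M s t) t)" .
qed

lemma pm_pos: "s > 0 \<Longrightarrow> t > 0 \<Longrightarrow> power_mean q s t > 0"
proof -
  assume s: "s > 0" and t: "t > 0"
  have h: "s powr q + t powr q > 0" using s t by (smt (verit) powr_gt_zero)
  show ?thesis unfolding power_mean_def using s t h by auto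
qed

lemma pm_powr: "q \<noteq> 0 \<Longrightarrow> s > 0 \<Longrightarrow> t > 0 \<Longrightarrow> power_mean q s t powr q = (s powr q + t powr q) / 2"
  unfolding power_mean_def
  by (simp add: powr_powr add_pos_pos)

lemma power_mean_stable: "stable_mean (power_mean q)"
  unfolding stable_mean_def
proof (intro allI impI)
  fix s t :: real assume s: "s > 0" and t: "t > 0"
  show "power_mean q s t = power_mean q (power_mean q s (power_mean q s t)) (power_mean q (power_mean q s t) t)"
  proof (cases "q = 0")
    case True
    define m where "m = sqrt (s*t)"
    have m: "m > 0" using s t m_def by simp
    have st: "s * t = m * m" unfolding m_def using s t
      by simp
    have "sqrt (s*m) * sqrt (m*t) = sqrt ((s*t)*(m*m))"
      by (simp add: real_sqrt_mult[symmetric] ac_simps)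
    also have "\<dots> = sqrt (m*m*(m*m))" using st by simp
    also have "\<dots> = m*m" using m by simp
    finally have "sqrt (sqrt (s*m) * sqrt (m*t)) = m" using m by simp
    then show ?thesis using True m_def by (simp add: power_mean_def)
  next
    case False
    define m where "m = power_mean q s t"
    have m: "m > 0" using pm_pos s t m_def by simp
    have a: "power_mean q s m > 0" "power_mean q m t > 0" using pm_pos s t m by auto
    have "power_mean q (power_mean q s m) (power_mean q m t) powr q
        = (power_mean q s m powr q + power_mean q m t powr q)/2"
      using pm_powr[OF False a] .
    also have "\<dots> = ((s powr q + m powr q)/2 + (m powr q + t powr q)/2)/2"
      by (simp only: pm_powr[OF False s m] pm_powr[OF False m t])
    also have "\<dots> = m powr q" using pm_powr[OF False s t] unfolding m_def[symmetric] by (simp add: field_simps)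
    finally have eq: "power_mean q (power_mean q s m) (power_mean q m t) powr q = m powr q" .
    have "power_mean q (power_mean q s m) (power_mean q m t) = m"
    proof -
      let ?x = "power_mean q (power_mean q s m) (power_mean q m t)"
      have "?x > 0" using pm_pos a by simp
      then have "?x = (?x powr q) powr (1/q)" using False by (simp add: powr_powr)
      also have "\<dots> = (m powr q) powr (1/q)" using eq by simp
      also have "\<dots> = m" using m False by (simp add: powr_powr)
      finally show ?thesis .
    qed
    then show ?thesis using m_def by simp
  qed
qed



definition DF :: "(real \<Rightarrow> real) \<Rightarrow> real \<Rightarrow> real" where
 "DF F y = ((F y - y/2)/2 + F (F y + y/2) + (F y + y/2)/2 + F (y/2 - F y))/2
   + F ((F y + y/2)/2 + F (y/2 - F y) - ((F y - y/2)/2 + F (F y + y/2))) - F y"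

lemma generic_defect:
  fixes G :: "real \<Rightarrow> real \<Rightarrow> real"
  assumes lam: "lam \<noteq> 0"
    and rep: "\<And>a b. G (exp a) (exp b) = exp ((a+b)/2 + F (lam*(b-a))/lam)"
    and st: "stable_mean G"
  shows "DF F y = 0"
proof -
  define g where "g a b = (a+b)/2 + F (lam*(b-a))/lam" for a b
  have repg: "G (exp a) (exp b) = exp (g a b)" for a b using rep g_def by simp
  define d where "d = y / lam"
  define a where "a = -d/2"
  define b where "b = d/2"
  define m where "m = g a b"
  have "G (exp a) (exp b) = G (G (exp a) (G (exp a) (exp b))) (G (G (exp a) (exp b)) (exp b))"
    using st unfolding stable_mean_def by simp
  hence "exp (g a b) = exp (g (g a m) (g m b))" by (simp add: repg m_def)
  hence E: "m = g (g a m) (g m b)" using m_def by simp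
  have yd: "lam * (b - a) = y" using lam by (simp add: a_def b_def d_def)
  have ab: "(a + b)/2 = 0" by (simp add: a_def b_def)
  have m: "m = F y / lam" unfolding m_def g_def yd ab by simp
  have ma: "lam * (m - a) = F y + y/2" using lam by (simp add: m a_def d_def field_simps)
  have bm: "lam * (b - m) = y/2 - F y" using lam by (simp add: m b_def d_def field_simps)
  define u where "u = g a m"
  define v where "v = g m b"
  have u: "lam * u = (F y - y/2)/2 + F (F y + y/2)"
    unfolding u_def g_def ma using lam by (simp add: m a_def d_def field_simps)
  have v: "lam * v = (F y + y/2)/2 + F (y/2 - F y)"
    unfolding v_def g_def bm using lam by (simp add: m b_def d_def field_simps)
  have "lam * m = lam * g u v" using E u_def v_def by simp
  also have "\<dots> = (lam*u + lam*v)/2 + F (lam*v - lam*u)"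
    using lam by (simp add: g_def field_simps)
  finally have "F y = (lam*u + lam*v)/2 + F (lam*v - lam*u)" using lam m by simp
  then show ?thesis unfolding DF_def u v by (simp add: field_simps)
qed



definition Fp :: "real \<Rightarrow> real \<Rightarrow> real \<Rightarrow> real" where
 "Fp c e x = c*x^2 + e*x^4"
definition Qf :: "real \<Rightarrow> real \<Rightarrow> real \<Rightarrow> real \<Rightarrow> real" where
 "Qf c e x x' = c*(x+x') + e*(x+x')*(x^2+x'^2)"
definition p1 where "p1 F y = F y + y/2"
definition p2 where "p2 F y = y/2 - F y"
definition p3 where "p3 F y = (F y + y/2)/2 + F (y/2 - F y) - ((F y - y/2)/2 + F (F y + y/2))"

lemma DF_alt: "DF F y = ((F y - y/2)/2 + F (p1 F y) + (F y + y/2)/2 + F (p2 F y))/2 + F (p3 F y) - F y"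
  unfolding DF_def p1_def p2_def p3_def by simp

lemma Fp_diff: "Fp c e x - Fp c e x' = (x - x') * Qf c e x x'"
  unfolding Fp_def Qf_def by (simp add: algebra_simps power2_eq_square power4_eq_xxxx)

lemma DF_asymp:
  fixes F :: "real \<Rightarrow> real"
  assumes F1: "((\<lambda>x. (F x - Fp c e x)/x^4) \<longlongrightarrow> 0) (at_right 0)"
    and F2: "filterlim (p1 F) (at_right 0) (at_right 0)"
    and F3: "filterlim (p2 F) (at_right 0) (at_right 0)"
    and F4: "filterlim (p3 F) (at_right 0) (at_right 0)"
    and B1: "((\<lambda>y. p1 F y / y) \<longlongrightarrow> 1/2) (at_right 0)"
    and B2: "((\<lambda>y. p2 F y / y) \<longlongrightarrow> 1/2) (at_right 0)"
    and B3: "((\<lambda>y. p3 F y / y) \<longlongrightarrow> 1/2) (at_right 0)"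
    and G: "((\<lambda>y. DF (Fp c e) y / y^4) \<longlongrightarrow> K) (at_right 0)"
  shows "((\<lambda>y. DF F y / y^4) \<longlongrightarrow> K) (at_right 0)"
proof -
  define G where "G = Fp c e"
  define \<rho> where "\<rho> x = (F x - G x)/x^4" for x
  have r0: "(\<rho> \<longlongrightarrow> 0) (at_right 0)" using F1 unfolding \<rho>_def G_def .
  have r1: "((\<lambda>y. \<rho> (p1 F y)) \<longlongrightarrow> 0) (at_right 0)" using filterlim_compose[OF r0 F2] by (simp add: o_def)
  have r2: "((\<lambda>y. \<rho> (p2 F y)) \<longlongrightarrow> 0) (at_right 0)" using filterlim_compose[OF r0 F3] by (simp add: o_def)
  have r3: "((\<lambda>y. \<rho> (p3 F y)) \<longlongrightarrow> 0) (at_right 0)" using filterlim_compose[OF r0 F4] by (simp add: o_def)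
  have z1: "(p1 F \<longlongrightarrow> 0) (at_right 0)" using F2 filterlim_at by blast
  have z2: "(p2 F \<longlongrightarrow> 0) (at_right 0)" using F3 filterlim_at by blast
  have z3: "(p3 F \<longlongrightarrow> 0) (at_right 0)" using F4 filterlim_at by blast
  have y0: "((\<lambda>y::real. y) \<longlongrightarrow> 0) (at_right 0)" by (rule tendsto_ident_at)
  have g1: "(p1 G \<longlongrightarrow> 0) (at_right 0)" unfolding p1_def G_def Fp_def
    using y0 by (auto intro!: tendsto_eq_intros)
  have g2: "(p2 G \<longlongrightarrow> 0) (at_right 0)" unfolding p2_def G_def Fp_def
    using y0 by (auto intro!: tendsto_eq_intros)
  have g3: "(p3 G \<longlongrightarrow> 0) (at_right 0)" unfolding p3_def G_def Fp_def
    using y0 by (auto intro!: tendsto_eq_intros)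
  have q1: "((\<lambda>y. Qf c e (p1 F y) (p1 G y)) \<longlongrightarrow> 0) (at_right 0)"
    unfolding Qf_def using z1 g1 by (auto intro!: tendsto_eq_intros)
  have q2: "((\<lambda>y. Qf c e (p2 F y) (p2 G y)) \<longlongrightarrow> 0) (at_right 0)"
    unfolding Qf_def using z2 g2 by (auto intro!: tendsto_eq_intros)
  have q3: "((\<lambda>y. Qf c e (p3 F y) (p3 G y)) \<longlongrightarrow> 0) (at_right 0)"
    unfolding Qf_def using z3 g3 by (auto intro!: tendsto_eq_intros)
  define T1 where "T1 y = \<rho> (p1 F y) * (p1 F y / y)^4 + \<rho> y * Qf c e (p1 F y) (p1 G y)" for y
  define T2 where "T2 y = \<rho> (p2 F y) * (p2 F y / y)^4 - \<rho> y * Qf c e (p2 F y) (p2 G y)" for y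
  define T3 where "T3 y = \<rho> (p3 F y) * (p3 F y / y)^4 + (T2 y - T1 y) * Qf c e (p3 F y) (p3 G y)" for y
  have t1: "(T1 \<longlongrightarrow> 0) (at_right 0)" unfolding T1_def
    using tendsto_add[OF tendsto_mult[OF r1 tendsto_power[OF B1, of 4]] tendsto_mult[OF r0 q1]] by simp
  have t2: "(T2 \<longlongrightarrow> 0) (at_right 0)" unfolding T2_def
    using tendsto_diff[OF tendsto_mult[OF r2 tendsto_power[OF B2, of 4]] tendsto_mult[OF r0 q2]] by simp
  have t3: "(T3 \<longlongrightarrow> 0) (at_right 0)" unfolding T3_def
    using tendsto_add[OF tendsto_mult[OF r3 tendsto_power[OF B3, of 4]] tendsto_mult[OF tendsto_diff[OF t2 t1] q3]] by simp
  have lim: "((\<lambda>y. DF G y / y^4 + ((\<rho> y/2 + T1 y + \<rho> y/2 + T2 y)/2 + T3 y - \<rho> y)) \<longlongrightarrow> K + 0) (at_right 0)"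
  proof -
    have inner: "((\<lambda>y. (\<rho> y/2 + T1 y + \<rho> y/2 + T2 y)/2 + T3 y - \<rho> y) \<longlongrightarrow> 0) (at_right 0)"
      using tendsto_diff[OF tendsto_add[OF tendsto_divide[OF tendsto_add[OF tendsto_add[OF tendsto_add[OF tendsto_divide[OF r0 tendsto_const[of 2]] t1] tendsto_divide[OF r0 tendsto_const[of 2]]] t2] tendsto_const[of 2]] t3] r0]
      by simp
    show ?thesis unfolding G_def using tendsto_add[OF G inner] .
  qed
  have ev: "\<forall>\<^sub>F y in at_right 0. p1 F y > 0 \<and> p2 F y > 0 \<and> p3 F y > 0 \<and> y > 0"
  proof -
    have e1: "\<forall>\<^sub>F y in at_right 0. p1 F y > 0" using F2 unfolding filterlim_at by (auto elim: eventually_mono)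
    have e2: "\<forall>\<^sub>F y in at_right 0. p2 F y > 0" using F3 unfolding filterlim_at by (auto elim: eventually_mono)
    have e3: "\<forall>\<^sub>F y in at_right 0. p3 F y > 0" using F4 unfolding filterlim_at by (auto elim: eventually_mono)
    have e4: "\<forall>\<^sub>F y in at_right (0::real). y > 0" by (rule eventually_at_right_less)
    show ?thesis using eventually_conj[OF e1 eventually_conj[OF e2 eventually_conj[OF e3 e4]]] .
  qed
  have "\<forall>\<^sub>F y in at_right 0. DF G y / y^4 + ((\<rho> y/2 + T1 y + \<rho> y/2 + T2 y)/2 + T3 y - \<rho> y) = DF F y / y^4"
    using ev
  proof (rule eventually_mono)
    fix y :: real assume A: "p1 F y > 0 \<and> p2 F y > 0 \<and> p3 F y > 0 \<and> y > 0"
    have y: "y \<noteq> 0" using A by simp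
    have FG: "F x = G x + x^4 * \<rho> x" if "x \<noteq> 0" for x using that by (simp add: \<rho>_def)
    have d0: "F y - G y = y^4 * \<rho> y" using FG[OF y] by simp
    have d1: "F (p1 F y) - G (p1 G y) = y^4 * T1 y"
    proof -
      have "F (p1 F y) - G (p1 G y) = (G (p1 F y) - G (p1 G y)) + (p1 F y)^4 * \<rho> (p1 F y)"
        using FG[of "p1 F y"] A by simp
      also have "G (p1 F y) - G (p1 G y) = (p1 F y - p1 G y) * Qf c e (p1 F y) (p1 G y)"
        unfolding G_def by (rule Fp_diff)
      also have "p1 F y - p1 G y = y^4 * \<rho> y" using d0 by (simp add: p1_def)
      finally show ?thesis using y by (simp add: T1_def field_simps)
    qed
    have d2: "F (p2 F y) - G (p2 G y) = y^4 * T2 y"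
    proof -
      have "F (p2 F y) - G (p2 G y) = (G (p2 F y) - G (p2 G y)) + (p2 F y)^4 * \<rho> (p2 F y)"
        using FG[of "p2 F y"] A by simp
      also have "G (p2 F y) - G (p2 G y) = (p2 F y - p2 G y) * Qf c e (p2 F y) (p2 G y)"
        unfolding G_def by (rule Fp_diff)
      also have "p2 F y - p2 G y = - (y^4 * \<rho> y)" using d0 by (simp add: p2_def)
      also have "(- (y^4 * \<rho> y)) * Qf c e (p2 F y) (p2 G y) + (p2 F y)^4 * \<rho> (p2 F y) = y^4 * T2 y"
        using y by (simp add: T2_def power_divide algebra_simps)
      finally show ?thesis .
    qed
    have p3d: "p3 F y - p3 G y = (F (p2 F y) - G (p2 G y)) - (F (p1 F y) - G (p1 G y))"
      unfolding p1_def p2_def p3_def by (simp add: field_simps)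
    have d3: "F (p3 F y) - G (p3 G y) = y^4 * T3 y"
    proof -
      have "F (p3 F y) - G (p3 G y) = (G (p3 F y) - G (p3 G y)) + (p3 F y)^4 * \<rho> (p3 F y)"
        using FG[of "p3 F y"] A by simp
      also have "G (p3 F y) - G (p3 G y) = (p3 F y - p3 G y) * Qf c e (p3 F y) (p3 G y)"
        unfolding G_def by (rule Fp_diff)
      also have "p3 F y - p3 G y = y^4 * (T2 y - T1 y)" using p3d d1 d2 by (simp add: algebra_simps)
      also have "(y^4 * (T2 y - T1 y)) * Qf c e (p3 F y) (p3 G y) + (p3 F y)^4 * \<rho> (p3 F y) = y^4 * T3 y"
        using y by (simp add: T3_def power_divide algebra_simps)
      finally show ?thesis .
    qed
    have "DF F y - DF G y = ((F y - G y)/2 + (F (p1 F y) - G (p1 G y)) + (F y - G y)/2 + (F (p2 F y) - G (p2 G y)))/2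
             + (F (p3 F y) - G (p3 G y)) - (F y - G y)"
      unfolding DF_alt by (simp add: field_simps)
    also have "\<dots> = y^4 * ((\<rho> y/2 + T1 y + \<rho> y/2 + T2 y)/2 + T3 y - \<rho> y)"
      unfolding d0 d1 d2 d3 by (simp add: field_simps)
    finally have E: "DF F y = DF G y + y^4 * ((\<rho> y/2 + T1 y + \<rho> y/2 + T2 y)/2 + T3 y - \<rho> y)"
      by linarith
    show "DF G y / y^4 + ((\<rho> y/2 + T1 y + \<rho> y/2 + T2 y)/2 + T3 y - \<rho> y) = DF F y / y^4"
      unfolding E using y by (simp add: add_divide_distrib)
  qed
  from tendsto_cong[OF this] lim show ?thesis by simp
qed



definition H :: "real \<Rightarrow> real \<Rightarrow> real" where
 "H p x = ln ((exp (p*x/2) + exp (-(p*x/2))) / (exp ((p-1)*x/2) + exp (-((p-1)*x/2))))"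

lemma DF_Fp: "((\<lambda>d. DF (Fp c e) d / d^4) \<longlongrightarrow> -(3*e/8) - c*c*c) (at_right 0)"
  unfolding DF_def Fp_def by (real_asymp simp add: field_simps power2_eq_square)

lemma H1: "((\<lambda>x. (H P x - Fp ((2*P-1)/8) (-(2*P-1)*(P^2+(P-1)^2)/192) x)/x^4) \<longlongrightarrow> 0) (at_right 0)"
  unfolding H_def Fp_def by (real_asymp simp add: field_simps power2_eq_square)

lemma H2: "filterlim (p1 (H P)) (at_right 0) (at_right 0)"
  unfolding H_def p1_def by (real_asymp simp add: field_simps power2_eq_square)
lemma H3: "filterlim (p2 (H P)) (at_right 0) (at_right 0)"
  unfolding H_def p2_def by (real_asymp simp add: field_simps power2_eq_square)
lemma H4: "filterlim (p3 (H P)) (at_right 0) (at_right 0)"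
  unfolding H_def p3_def by (real_asymp simp add: field_simps power2_eq_square)
lemma HB1: "((\<lambda>y. p1 (H P) y / y) \<longlongrightarrow> 1/2) (at_right 0)"
  unfolding H_def p1_def by (real_asymp simp add: field_simps power2_eq_square)
lemma HB2: "((\<lambda>y. p2 (H P) y / y) \<longlongrightarrow> 1/2) (at_right 0)"
  unfolding H_def p2_def by (real_asymp simp add: field_simps power2_eq_square)
lemma HB3: "((\<lambda>y. p3 (H P) y / y) \<longlongrightarrow> 1/2) (at_right 0)"
  unfolding H_def p3_def by (real_asymp simp add: field_simps power2_eq_square)



definition KK :: "real \<Rightarrow> real" where
 "KK x = (x/2) * ((exp (x/2) - exp (-(x/2))) / (exp (x/2) + exp (-(x/2))))"

lemma K1: "((\<lambda>x. (KK x - Fp (1/4) (-1/48) x)/x^4) \<longlongrightarrow> 0) (at_right 0)"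
  unfolding KK_def Fp_def by (real_asymp simp add: field_simps power2_eq_square)
lemma K2: "filterlim (p1 KK) (at_right 0) (at_right 0)"
  unfolding KK_def p1_def by (real_asymp simp add: field_simps power2_eq_square)
lemma K3: "filterlim (p2 KK) (at_right 0) (at_right 0)"
  unfolding KK_def p2_def by (real_asymp simp add: field_simps power2_eq_square)
lemma K4: "filterlim (p3 KK) (at_right 0) (at_right 0)"
  unfolding KK_def p3_def by (real_asymp simp add: field_simps power2_eq_square)
lemma KB1: "((\<lambda>y. p1 KK y / y) \<longlongrightarrow> 1/2) (at_right 0)"
  unfolding KK_def p1_def by (real_asymp simp add: field_simps power2_eq_square)
lemma KB2: "((\<lambda>y. p2 KK y / y) \<longlongrightarrow> 1/2) (at_right 0)"
  unfolding KK_def p2_def by (real_asymp simp add: field_simps power2_eq_square)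
lemma KB3: "((\<lambda>y. p3 KK y / y) \<longlongrightarrow> 1/2) (at_right 0)"
  unfolding KK_def p3_def by (real_asymp simp add: field_simps power2_eq_square)

lemma KK_lim: "((\<lambda>y. DF KK y / y^4) \<longlongrightarrow> -(3*(-1/48)/8) - (1/4)*(1/4)*(1/4)) (at_right 0)"
  by (rule DF_asymp[OF K1 K2 K3 K4 KB1 KB2 KB3 DF_Fp])

lemma H_lim: "((\<lambda>y. DF (H P) y / y^4) \<longlongrightarrow>
   -(3*(-(2*P-1)*(P^2+(P-1)^2)/192)/8) - ((2*P-1)/8)*((2*P-1)/8)*((2*P-1)/8)) (at_right 0)"
  by (rule DF_asymp[OF H1 H2 H3 H4 HB1 HB2 HB3 DF_Fp])

lemma const_zero_lim:
  assumes "((\<lambda>y. DF F y / y^4) \<longlongrightarrow> L) (at_right 0)" and "\<And>y. DF F y = 0"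
  shows "L = 0"
proof -
  have "((\<lambda>y. DF F y / y^4) \<longlongrightarrow> 0) (at_right (0::real))" using assms(2) by simp
  from tendsto_unique[OF _ assms(1) this] show ?thesis by simp
qed

lemma rep_H:
  assumes pr: "p \<noteq> r"
  shows "gini_mean p r (exp a) (exp b) = exp ((a+b)/2 + H (p/(p-r)) ((p-r)*(b-a))/(p-r))"
proof -
  define l where "l = p - r"
  have l: "l \<noteq> 0" using pr l_def by simp
  define c where "c = (a+b)/2"
  define x where "x = b - a"
  have a: "a = c - x/2" and b: "b = c + x/2" by (simp_all add: c_def x_def field_simps)
  define S where "S = exp (p*x/2) + exp (-(p*x/2))"
  define T where "T = exp (r*x/2) + exp (-(r*x/2))"
  have S: "S > 0" "T > 0" by (simp_all add: S_def T_def add_pos_pos)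
  have n: "exp (p*a) + exp (p*b) = exp (p*c) * S"
    unfolding S_def a b by (simp add: distrib_left exp_add[symmetric] algebra_simps)
  have d: "exp (r*a) + exp (r*b) = exp (r*c) * T"
    unfolding T_def a b by (simp add: distrib_left exp_add[symmetric] algebra_simps)
  have Q: "(exp (p*a) + exp (p*b)) / (exp (r*a) + exp (r*b)) = exp (l*c) * (S/T)"
    unfolding n d l_def by (simp add: left_diff_distrib exp_diff)
  have Hx: "H (p/(p-r)) ((p-r)*(b-a)) = ln (S/T)"
  proof -
    have 1: "p/(p-r) * ((p-r)*(b-a))/2 = p*x/2" using pr by (simp add: x_def field_simps)
    have 2: "(p/(p-r) - 1) * ((p-r)*(b-a))/2 = r*x/2" using pr by (simp add: x_def field_simps)
    show ?thesis unfolding H_def 1 2 S_def T_def ..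
  qed
  have "gini_mean p r (exp a) (exp b) = (exp (l*c) * (S/T)) powr (1/l)"
    using pr Q unfolding gini_mean_def l_def by (simp add: exp_powr_real mult.commute)
  also have "\<dots> = exp ((1/l) * ln (exp (l*c) * (S/T)))"
    using S by (simp add: powr_def)
  also have "ln (exp (l*c) * (S/T)) = l*c + ln (S/T)" using S ln_mult[of "exp (l*c)" "S/T"] by simp
  also have "exp ((1/l) * (l*c + ln (S/T))) = exp (c + ln (S/T)/l)"
    using l by (simp add: field_simps)
  finally show ?thesis using Hx by (simp add: c_def l_def)
qed



lemma rep_K:
  assumes p: "p \<noteq> 0"
  shows "gini_mean p p (exp a) (exp b) = exp ((a+b)/2 + KK (p*(b-a))/p)"
proof -
  define c where "c = (a+b)/2"
  define x where "x = b - a"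
  have a: "a = c - x/2" and b: "b = c + x/2" by (simp_all add: c_def x_def field_simps)
  define U where "U = exp (p*x/2)"
  define V where "V = exp (-(p*x/2))"
  define E0 where "E0 = exp (p*c)"
  have pos: "U > 0" "V > 0" "E0 > 0" by (simp_all add: U_def V_def E0_def)
  have ea: "exp (a*p) = E0 * V" unfolding a E0_def V_def
    by (simp add: exp_add[symmetric] algebra_simps)
  have eb: "exp (b*p) = E0 * U" unfolding b E0_def U_def
    by (simp add: exp_add[symmetric] algebra_simps)
  have "(exp a powr p * ln (exp a) + exp b powr p * ln (exp b)) / (exp a powr p + exp b powr p)
      = (exp (a*p) * a + exp (b*p) * b) / (exp (a*p) + exp (b*p))"
    by (simp add: exp_powr_real)
  also have "\<dots> = (E0*V*a + E0*U*b) / (E0*(V + U))" unfolding ea eb by (simp add: algebra_simps)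
  also have "\<dots> = (E0*(V*a + U*b)) / (E0*(V + U))" by (simp add: algebra_simps)
  also have "\<dots> = (V*a + U*b) / (V + U)" using pos by simp
  also have "\<dots> = c + (x/2) * ((U - V)/(U + V))" unfolding a b using pos
    by (simp add: field_simps)
  also have "(x/2) * ((U - V)/(U + V)) = KK (p*x) / p" unfolding KK_def U_def V_def using p
    by simp
  also have "c + KK (p*x) / p = (a+b)/2 + KK (p*(b-a))/p" unfolding c_def x_def ..
  finally show ?thesis using p unfolding gini_mean_def by simp
qed

lemma gini_pm:
  assumes "p * r * (p + r) = 0" and s: "s > 0" and t: "t > 0"
  shows "gini_mean p r s t = power_mean (if p = 0 then r else if r = 0 then p else 0) s t"
proof -
  have sp: "s powr q > 0" "t powr q > 0" for q using s t by auto
  consider "p = 0" "r = 0" | "p = 0" "r \<noteq> 0" | "p \<noteq> 0" "r = 0" | "p \<noteq> 0" "r \<noteq> 0" "r = -p"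
    using assms(1) by (auto simp: add_eq_0_iff)
  then show ?thesis
  proof cases
    case 1 then show ?thesis by (simp add: gini_mean_def power_mean_def)
  next
    case 2
    have X: "s powr r + t powr r > 0" using sp by (simp add: add_pos_pos)
    have "gini_mean p r s t = (2 / (s powr r + t powr r)) powr (- (1/r))"
      using 2 s t by (simp add: gini_mean_def)
    also have "\<dots> = ((s powr r + t powr r)/2) powr (1/r)"
      using X by (simp add: powr_minus powr_divide)
    finally show ?thesis using 2 by (simp add: power_mean_def)
  next
    case 3
    then show ?thesis using s t by (simp add: gini_mean_def power_mean_def)
  next
    case 4
    have X: "s powr p + t powr p > 0" using sp by (simp add: add_pos_pos)
    have Y: "s powr (-p) + t powr (-p) = (s powr p + t powr p) / (s powr p * t powr p)"
      using sp[of p] by (simp add: powr_minus field_simps)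
    have "(s powr p + t powr p) / (s powr (-p) + t powr (-p)) = s powr p * t powr p"
    proof -
      have X': "s powr p + t powr p \<noteq> 0" using X by linarith
      have B: "s powr p * t powr p \<noteq> 0" using sp[of p] by (metis less_irrefl mult_pos_pos)
      have gen: "A \<noteq> 0 \<Longrightarrow> B \<noteq> 0 \<Longrightarrow> A / (A / B) = B" for A B :: real by simp
      show ?thesis unfolding Y by (rule gen[OF X' B])
    qed
    also have "\<dots> = (s*t) powr p" by (simp add: powr_mult)
    finally have "(s powr p + t powr p) / (s powr (-p) + t powr (-p)) = (s*t) powr p" .
    then have "gini_mean p r s t = ((s*t) powr p) powr (1/(2*p))"
      using 4 by (simp add: gini_mean_def)
    also have "\<dots> = (s*t) powr (1/2)" using 4 by (simp add: powr_powr)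
    also have "\<dots> = sqrt (s*t)" using s t by (simp add: powr_half_sqrt)
    finally show ?thesis using 4 by (simp add: power_mean_def)
  qed
qed

theorem mainTheorem13:
  fixes p r :: real
  shows "stable_mean (gini_mean p r) \<longleftrightarrow> p * r * (p + r) = 0"
proof
  assume st: "stable_mean (gini_mean p r)"
  show "p * r * (p + r) = 0"
  proof (cases "p = r")
    case True
    show ?thesis
    proof (rule ccontr)
      assume "p * r * (p + r) \<noteq> 0"
      then have p: "p \<noteq> 0" by auto
      have "DF KK y = 0" for y
        by (rule generic_defect[OF p _ ]) (use rep_K[OF p] st True in auto)
      then have "-(3*(-1/48)/8) - (1/4)*(1/4)*(1/4::real) = 0"
        by (intro const_zero_lim[OF KK_lim])
      then show False by simp
    qed
  next
    case False
    define P where "P = p/(p-r)"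
    have l: "p - r \<noteq> 0" using False by simp
    have "DF (H P) y = 0" for y
      by (rule generic_defect[OF l _ ]) (use rep_H[OF False] st P_def in auto)
    then have E: "-(3*(-(2*P-1)*(P^2+(P-1)^2)/192)/8) - ((2*P-1)/8)*((2*P-1)/8)*((2*P-1)/8) = 0"
      by (intro const_zero_lim[OF H_lim])
    have iden: "-(3*(-(2*P-1)*(P^2+(P-1)^2)/192)/8) - ((2*P-1)/8)*((2*P-1)/8)*((2*P-1)/8)
        = -(P*(P-1)*(2*P-1))/256"
      by (simp add: field_simps power2_eq_square)
    have "-(P*(P-1)*(2*P-1))/256 = 0" using E iden by linarith
    then have "P*(P-1)*(2*P-1) = 0" by simp
    then have "P = 0 \<or> P - 1 = 0 \<or> 2*P - 1 = 0" by (simp only: mult_eq_0_iff) blast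
    then have "p = 0 \<or> r = 0 \<or> p + r = 0" using l unfolding P_def by (auto simp: field_simps)
    then show ?thesis by auto
  qed
next
  assume h: "p * r * (p + r) = 0"
  define q where "q = (if p = 0 then r else if r = 0 then p else 0)"
  have "stable_mean (gini_mean p r) \<longleftrightarrow> stable_mean (power_mean q)"
    by (rule stable_cong) (use gini_pm[OF h] pm_pos q_def in auto)
  then show "stable_mean (gini_mean p r)" using power_mean_stable by simp
qed

end
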